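(* For every positive integer $n$, \[ \mathrm{B}_n=\frac{1}{e}\sum_{k=1}^{n}(-1)^{n-k}\,S(n,k)\,k!\;{}_1F_1(k+1;2;1). \]
   Context: $\mathrm{B}_n$ denotes the $n$-th Bell number, defined by the generating function $e^{e^x-1}=\sum_{k=0}^\infty \mathrm{B}_k\frac{x^k}{k!}$ (equivalently, $\mathrm{B}_n$ is the number of partitions of an $n$-element set into nonempty blocks). $S(n,k)$ denotes the Stirling number of the second kind, $S(n,k)=\frac{1}{k!}\sum_{i=0}^{k}(-1)^i\binom{k}{i}(k-i)^n$. ${}_1F_1(a;b;z)=\sum_{m=0}^\infty \frac{(a)_m}{(b)_m}\frac{z^m}{m!}$ is Kummer's confluent hypergeometric function, where $(a)_0=1$ and $(a)_m=a(a+1)\cdots(a+m-1)$ for $m\ge1$. *)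

theory Defs
  imports "HOL-Analysis.Analysis" "HOL-Combinatorics.Stirling" "HOL-Library.Disjoint_Sets"
begin

definition Bell :: "nat \<Rightarrow> nat" where
  "Bell n = card {P. partition_on {..<n} P}"

definition hyp1F1 :: "real \<Rightarrow> real \<Rightarrow> real \<Rightarrow> real" where
  "hyp1F1 a b z = (\<Sum>m. pochhammer a m / pochhammer b m * z ^ m / fact m)"

end

theory Submission
  imports Defs
begin


lemma ff_Suc: "(-1::real)^Suc k * pochhammer (-x) (Suc k) = ((-1)^k * pochhammer (-x) k) * (x - of_nat k)"
  by (simp add: pochhammer_Suc algebra_simps)

lemma stirling2_poly:
  "(\<Sum>k\<le>n. of_nat (Stirling n k) * ((-1)^k * pochhammer (-x) k)) = (x::real)^n"
proof (induction n)
  case 0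
  then show ?case by simp
next
  case (Suc n)
  define f where "f k = (-1::real)^k * pochhammer (-x) k" for k
  have fS: "f (Suc k) = f k * (x - of_nat k)" for k unfolding f_def by (rule ff_Suc)
  define g where "g k = of_nat k * of_nat (Stirling n k) * f k" for k
  have IH: "(\<Sum>k\<le>n. of_nat (Stirling n k) * f k) = x^n" using Suc.IH unfolding f_def .
  have "x^Suc n = x * (\<Sum>k\<le>n. of_nat (Stirling n k) * f k)"
    using IH by simp
  also have "\<dots> = (\<Sum>k\<le>n. of_nat (Stirling n k) * (x * f k))"
    by (simp add: sum_distrib_left algebra_simps)
  also have "\<dots> = (\<Sum>k\<le>n. of_nat (Stirling n k) * f (Suc k)) + (\<Sum>k\<le>n. g k)"
    by (simp add: fS g_def sum.distrib[symmetric] algebra_simps)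
  also have "(\<Sum>k\<le>n. g k) = (\<Sum>k\<le>n. g (Suc k))"
  proof -
    have "(\<Sum>k\<le>Suc n. g k) = g 0 + (\<Sum>k\<le>n. g (Suc k))" by (rule sum.atMost_Suc_shift)
    moreover have "(\<Sum>k\<le>Suc n. g k) = (\<Sum>k\<le>n. g k) + g (Suc n)" by simp
    moreover have "g 0 = 0" "g (Suc n) = 0" by (simp_all add: g_def)
    ultimately show ?thesis by simp
  qed
  also have "(\<Sum>k\<le>n. of_nat (Stirling n k) * f (Suc k)) + (\<Sum>k\<le>n. g (Suc k))
     = (\<Sum>k\<le>n. of_nat (Stirling (Suc n) (Suc k)) * f (Suc k))"
    by (simp add: g_def sum.distrib[symmetric] algebra_simps)
  also have "\<dots> = (\<Sum>k\<le>Suc n. of_nat (Stirling (Suc n) k) * f k)"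
    by (subst sum.atMost_Suc_shift) simp
  finally show ?case unfolding f_def by simp
qed



lemma partition_remove:
  assumes "partition_on A P" "B \<in> P"
  shows "partition_on (A - B) (P - {B})"
proof -
  have "P = insert B (P - {B})" using assms(2) by auto
  moreover have "disjnt B (\<Union>(P - {B}))"
    using assms unfolding partition_on_def disjoint_def disjnt_def by blast
  ultimately show ?thesis using partition_on_insert[of B "P - {B}" A] assms(1) by auto
qed

lemma part_card_le:
  assumes "finite A" "partition_on A P"
  shows "card P \<le> card A"
proof -
  have fin: "finite P" using finite_elements assms .
  have "card A = sum card P"
  proof -
    have "\<And>B. B \<in> P \<Longrightarrow> finite B"
      using assms partition_onD1[OF assms(2)] by (metis Union_upper rev_finite_subset)
    then show ?thesis
      using card_Union_disjoint[of P] partition_onD1[OF assms(2)] partition_onD2[OF assms(2)]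
      by (simp add: disjoint_def pairwise_def)
  qed
  moreover have "card P = (\<Sum>B\<in>P. 1)" by simp
  moreover have "(\<Sum>B\<in>P. (1::nat)) \<le> sum card P"
  proof (rule sum_mono)
    fix B assume "B \<in> P"
    then have "B \<noteq> {}" "finite B" using assms partition_onD3[OF assms(2)] partition_onD1[OF assms(2)]
      by (auto, metis Union_upper rev_finite_subset)
    then show "1 \<le> card B" by (simp add: Suc_leI card_gt_0_iff)
  qed
  ultimately show ?thesis by linarith
qed



lemma h1:
  assumes "partition_on A P" "a \<notin> A"
  shows "partition_on (insert a A) (insert {a} P)" "{a} \<notin> P"
proof -
  have U: "\<Union>P = A" using assms(1) partition_onD1 by blast
  then show "{a} \<notin> P" using assms(2) by auto
  have "disjnt {a} (\<Union>P)" using U assms(2) by (simp add: disjnt_def)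
  then show "partition_on (insert a A) (insert {a} P)"
    using partition_on_insert[of "{a}" P "insert a A"] assms by (simp add: insert_Diff_if)
qed

lemma h2:
  assumes "partition_on A P" "a \<notin> A" "B \<in> P"
  shows "partition_on (insert a A) (insert (insert a B) (P - {B}))" "insert a B \<notin> P - {B}"
proof -
  have U: "\<Union>P = A" using assms(1) partition_onD1 by blast
  then show "insert a B \<notin> P - {B}" using assms(2) by auto
  have r: "partition_on (A - B) (P - {B})" using partition_remove assms(1,3) .
  have "\<Union>(P - {B}) = A - B" using r partition_onD1 by blast
  then have "disjnt (insert a B) (\<Union>(P - {B}))" using assms(2) by (auto simp: disjnt_def)
  moreover have "insert a A - insert a B = A - B" using assms(2) by auto
  moreover have "insert a B \<subseteq> insert a A" using U assms(3) by auto
  ultimately show "partition_on (insert a A) (insert (insert a B) (P - {B}))"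
    using partition_on_insert[of "insert a B" "P - {B}" "insert a A"] r by simp
qed

lemma h3:
  assumes Q: "partition_on (insert a A) Q" and a: "a \<notin> A" and fin: "finite A"
  shows "(partition_on A (Q - {{a}}) \<and> Q = insert {a} (Q - {{a}})) \<or>
         (\<exists>P B. partition_on A P \<and> B \<in> P \<and> Q = insert (insert a B) (P - {B}) \<and> card P = card Q)"
proof -
  have U: "\<Union>Q = insert a A" by (rule partition_onD1[OF Q, symmetric])
  have "a \<in> \<Union>Q" unfolding U by simp
  then obtain B0 where B0: "B0 \<in> Q" "a \<in> B0" by (rule UnionE)
  have dis0: "disjnt X Y" if "X \<in> Q" "Y \<in> Q" "X \<noteq> Y" for X Y
    using pairwiseD[OF partition_onD2[OF Q] that] .
  have dis: "X \<inter> Y = {}" if "X \<in> Q" "Y \<in> Q" "X \<noteq> Y" for X Y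
    using dis0[OF that] unfolding disjnt_def .
  have ne: "{} \<notin> Q" using partition_onD3[OF Q] .
  have "finite (insert a A)" using fin by simp
  then have finQ: "finite Q" using Q by (rule finite_elements)
  have r: "partition_on (insert a A - B0) (Q - {B0})" using partition_remove Q B0(1) .
  show ?thesis
  proof (cases "B0 = {a}")
    case True
    have e: "insert a A - {a} = A" using a by auto
    have "partition_on A (Q - {{a}})" using r unfolding True e .
    moreover have "Q = insert {a} (Q - {{a}})" using B0 True by auto
    ultimately show ?thesis by blast
  next
    case False
    define B where "B = B0 - {a}"
    have Bne: "B \<noteq> {}" using False B0 unfolding B_def by auto
    have B0eq: "B0 = insert a B" using B0 unfolding B_def by auto
    have BnQ: "B \<notin> Q - {B0}"
    proof
      assume "B \<in> Q - {B0}"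
      then have "B \<inter> B0 = {}" using dis B0(1) by auto
      then show False using Bne unfolding B_def by auto
    qed
    define P where "P = insert B (Q - {B0})"
    have e2: "insert a A - B0 = A - B" using B0eq a by auto
    have r2: "partition_on (A - B) (Q - {B0})" using r unfolding e2 .
    have "\<Union>(Q - {B0}) = A - B" using r2 partition_onD1 by blast
    then have dj: "disjnt B (\<Union>(Q - {B0}))" by (auto simp: disjnt_def)
    have BA: "B \<subseteq> A" using U B0(1) a unfolding B_def by auto
    have pP: "partition_on A P"
      unfolding P_def using partition_on_insert[OF dj, of A] r2 Bne BA by blast
    have "P - {B} = Q - {B0}" unfolding P_def using BnQ by auto
    then have "Q = insert (insert a B) (P - {B})" using B0eq B0(1) by auto
    moreover have "card P = card Q"
    proof -
      have "card P = Suc (card (Q - {B0}))" unfolding P_def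
        using BnQ finQ by (simp add: card_insert_disjoint)
      also have "\<dots> = card Q" using card_Suc_Diff1[OF finQ B0(1)] .
      finally show ?thesis .
    qed
    moreover have "B \<in> P" unfolding P_def by simp
    ultimately show ?thesis using pP by blast
  qed
qed



lemma F_recover:
  assumes "partition_on A P" "a \<notin> A" "B \<in> P"
  shows "(\<lambda>X. X - {a}) ` (insert (insert a B) (P - {B})) = P"
proof -
  have U: "\<Union>P = A" using assms(1) partition_onD1 by blast
  have aX: "a \<notin> X" if "X \<in> P" for X using U that assms(2) by auto
  have "(\<lambda>X. X - {a}) ` (insert (insert a B) (P - {B})) = insert (insert a B - {a}) ((\<lambda>X. X - {a}) ` (P - {B}))"
    by simp
  also have "insert a B - {a} = B" using aX[OF assms(3)] by simp
  also have "(\<lambda>X. X - {a}) ` (P - {B}) = P - {B}"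
  proof -
    have "(\<lambda>X. X - {a}) ` (P - {B}) = (\<lambda>X. X) ` (P - {B})"
      by (rule image_cong) (use aX in auto)
    then show ?thesis by simp
  qed
  finally show ?thesis using assms(3) by auto
qed

lemma F_inj:
  assumes "partition_on A P" "a \<notin> A"
  shows "inj_on (\<lambda>B. insert (insert a B) (P - {B})) P"
proof (rule inj_onI)
  fix B B' assume B: "B \<in> P" "B' \<in> P" and eq: "insert (insert a B) (P - {B}) = insert (insert a B') (P - {B'})"
  have U: "\<Union>P = A" using assms(1) partition_onD1 by blast
  have aX: "a \<notin> X" if "X \<in> P" for X using U that assms(2) by auto
  have "insert a B \<in> insert (insert a B') (P - {B'})" using eq by blast
  then have "insert a B = insert a B' \<or> insert a B \<in> P" by blast
  moreover have "insert a B \<notin> P" using aX by blast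
  ultimately have "insert a B = insert a B'" by blast
  then have "insert a B - {a} = insert a B' - {a}" by simp
  then show "B = B'" using aX[OF B(1)] aX[OF B(2)] by simp
qed

lemma card_step:
  assumes fin: "finite A" and a: "a \<notin> A"
  shows "card {Q. partition_on (insert a A) Q \<and> card Q = Suc j} =
    card {P. partition_on A P \<and> card P = j} + Suc j * card {P. partition_on A P \<and> card P = Suc j}"
proof -
  define PA where "PA k = {P. partition_on A P \<and> card P = k}" for k
  define F where "F P B = insert (insert a B) (P - {B})" for P B
  define X where "X = insert {a} ` PA j"
  define Y where "Y = (\<Union>P\<in>PA (Suc j). F P ` P)"
  have finPA: "finite (PA k)" for k
    using finitely_many_partition_on[OF fin] unfolding PA_def by (rule rev_finite_subset) auto
  have finP: "finite P" if "P \<in> PA k" for P k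
    using that finite_elements[OF fin] unfolding PA_def by blast
  have S: "{Q. partition_on (insert a A) Q \<and> card Q = Suc j} = X \<union> Y"
  proof (intro equalityI subsetI)
    fix Q assume "Q \<in> {Q. partition_on (insert a A) Q \<and> card Q = Suc j}"
    then have Q: "partition_on (insert a A) Q" "card Q = Suc j" by auto
    from h3[OF Q(1) a fin] show "Q \<in> X \<union> Y"
    proof
      assume c: "partition_on A (Q - {{a}}) \<and> Q = insert {a} (Q - {{a}})"
      have "finite (Q - {{a}})" using c finite_elements[OF fin] by blast
      then have "card Q = Suc (card (Q - {{a}}))" using c by (metis card_insert_disjoint Diff_iff singletonI)
      then have "Q - {{a}} \<in> PA j" using c Q(2) unfolding PA_def by simp
      then show ?thesis unfolding X_def using c by blast
    next
      assume "\<exists>P B. partition_on A P \<and> B \<in> P \<and> Q = insert (insert a B) (P - {B}) \<and> card P = card Q"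
      then obtain P B where c: "partition_on A P" "B \<in> P" "Q = F P B" "card P = card Q"
        unfolding F_def by blast
      then have "P \<in> PA (Suc j)" unfolding PA_def using Q(2) by simp
      then show ?thesis unfolding Y_def using c by blast
    qed
  next
    fix Q assume "Q \<in> X \<union> Y"
    then show "Q \<in> {Q. partition_on (insert a A) Q \<and> card Q = Suc j}"
    proof
      assume "Q \<in> X"
      then obtain P where P: "P \<in> PA j" "Q = insert {a} P" unfolding X_def by blast
      have p: "partition_on A P" "card P = j" using P unfolding PA_def by auto
      have "card Q = Suc j" using P(2) h1(2)[OF p(1) a] finP[OF P(1)] p(2) by simp
      then show ?thesis using h1(1)[OF p(1) a] P(2) by simp
    next
      assume "Q \<in> Y"
      then obtain P B where P: "P \<in> PA (Suc j)" "B \<in> P" "Q = F P B" unfolding Y_def by blast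
      have p: "partition_on A P" "card P = Suc j" using P unfolding PA_def by auto
      have fP: "finite (P - {B})" using finP[OF P(1)] by simp
      have "card Q = Suc (card (P - {B}))" unfolding P(3) F_def
        using h2(2)[OF p(1) a P(2)] fP by (simp add: card_insert_disjoint)
      also have "\<dots> = card P" using card_Suc_Diff1[OF finP[OF P(1)] P(2)] .
      finally have "card Q = Suc j" using p(2) by simp
      then show ?thesis using h2(1)[OF p(1) a P(2)] P(3) unfolding F_def by simp
    qed
  qed
  have XY: "X \<inter> Y = {}"
  proof (rule ccontr)
    assume "X \<inter> Y \<noteq> {}"
    then obtain Q where "Q \<in> X" "Q \<in> Y" by blast
    then obtain P B where P: "P \<in> PA (Suc j)" "B \<in> P" "Q = F P B" "{a} \<in> Q"
      unfolding X_def Y_def by blast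
    have p: "partition_on A P" using P unfolding PA_def by auto
    have U: "\<Union>P = A" using p partition_onD1 by blast
    have "{a} = insert a B \<or> {a} \<in> P" using P(3,4) unfolding F_def by blast
    moreover have "{a} \<notin> P" using U a by auto
    moreover have "B \<noteq> {}" using partition_onD3[OF p] P(2) by auto
    moreover have "a \<notin> B" using U a P(2) by auto
    ultimately show False by auto
  qed
  have cX: "card X = card (PA j)"
    unfolding X_def
  proof (rule card_image, rule inj_onI)
    fix P P' assume "P \<in> PA j" "P' \<in> PA j" "insert {a} P = insert {a} P'"
    moreover have "{a} \<notin> P" using h1(2)[of A P a] a \<open>P \<in> PA j\<close> unfolding PA_def by blast
    moreover have "{a} \<notin> P'" using h1(2)[of A P' a] a \<open>P' \<in> PA j\<close> unfolding PA_def by blast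
    ultimately show "P = P'" by (metis Diff_insert_absorb)
  qed
  have cY: "card Y = (\<Sum>P\<in>PA (Suc j). card (F P ` P))"
    unfolding Y_def
  proof (rule card_UN_disjoint)
    show "finite (PA (Suc j))" by (rule finPA)
    show "\<forall>P\<in>PA (Suc j). finite (F P ` P)" using finP by blast
    show "\<forall>P\<in>PA (Suc j). \<forall>P'\<in>PA (Suc j). P \<noteq> P' \<longrightarrow> F P ` P \<inter> F P' ` P' = {}"
    proof (intro ballI impI)
      fix P P' assume P: "P \<in> PA (Suc j)" "P' \<in> PA (Suc j)" "P \<noteq> P'"
      show "F P ` P \<inter> F P' ` P' = {}"
      proof (rule ccontr)
        assume "F P ` P \<inter> F P' ` P' \<noteq> {}"
        then obtain B B' where B: "B \<in> P" "B' \<in> P'" "F P B = F P' B'" by blast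
        have "P = (\<lambda>X. X - {a}) ` F P B"
          using F_recover[of A P a B] P(1) B(1) a unfolding PA_def F_def by simp
        also have "\<dots> = (\<lambda>X. X - {a}) ` F P' B'" using B(3) by simp
        also have "\<dots> = P'"
          using F_recover[of A P' a B'] P(2) B(2) a unfolding PA_def F_def by simp
        finally show False using P(3) by simp
      qed
    qed
  qed
  also have "\<dots> = (\<Sum>P\<in>PA (Suc j). Suc j)"
  proof (rule sum.cong[OF refl])
    fix P assume P: "P \<in> PA (Suc j)"
    have "card (F P ` P) = card P"
      using card_image[OF F_inj[of A P a]] P a unfolding PA_def F_def by simp
    then show "card (F P ` P) = Suc j" using P unfolding PA_def by simp
  qed
  also have "\<dots> = Suc j * card (PA (Suc j))" by simp
  finally have cY': "card Y = Suc j * card (PA (Suc j))" .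
  have "card (X \<union> Y) = card X + card Y"
    using XY finPA finP by (intro card_Un_disjoint) (auto simp: X_def Y_def)
  then show ?thesis using S cX cY' unfolding PA_def by simp
qed



lemma card_partitions_k:
  assumes "finite A"
  shows "card {P. partition_on A P \<and> card P = k} = Stirling (card A) k"
  using assms
proof (induction A arbitrary: k rule: finite_induct)
  case empty
  have eq: "{P. partition_on {} P \<and> card P = k} = (if k = 0 then {{}} else {})"
    by (auto simp: partition_on_empty)
  show ?case unfolding eq by (cases k) simp_all
next
  case (insert x F)
  show ?case
  proof (cases k)
    case 0
    have e: "{P. partition_on (insert x F) P \<and> card P = k} = {}"
    proof (rule ccontr)
      assume "{P. partition_on (insert x F) P \<and> card P = k} \<noteq> {}"
      then obtain P where P: "partition_on (insert x F) P" "card P = 0" using 0 by auto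
      have "finite P" using finite_elements[OF _ P(1)] insert(1) by simp
      then have "P = {}" using P(2) by simp
      then show False using partition_onD1[OF P(1)] by simp
    qed
    show ?thesis unfolding e using 0 insert(1,2) by simp
  next
    case (Suc j)
    show ?thesis using card_step[OF insert(1,2), of j] insert(3)[of j] insert(3)[of "Suc j"] insert(1,2) Suc
      by simp
  qed
qed

lemma Bell_Stirling: "Bell n = (\<Sum>k\<le>n. Stirling n k)"
proof -
  define PA where "PA k = {P. partition_on {..<n} P \<and> card P = k}" for k
  have "{P. partition_on {..<n} P} = (\<Union>k\<in>{..n}. PA k)"
    unfolding PA_def using part_card_le[of "{..<n}"] by auto
  then have "Bell n = card (\<Union>k\<in>{..n}. PA k)" unfolding Bell_def by simp
  also have "\<dots> = (\<Sum>k\<le>n. card (PA k))"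
  proof (rule card_UN_disjoint)
    show "finite {..n}" by simp
    show "\<forall>i\<in>{..n}. finite (PA i)"
      using finitely_many_partition_on[of "{..<n}"] unfolding PA_def
      by (auto intro: rev_finite_subset)
    show "\<forall>i\<in>{..n}. \<forall>j\<in>{..n}. i \<noteq> j \<longrightarrow> PA i \<inter> PA j = {}" unfolding PA_def by auto
  qed
  also have "\<dots> = (\<Sum>k\<le>n. Stirling n k)"
    unfolding PA_def using card_partitions_k[of "{..<n}"] by simp
  finally show ?thesis .
qed



lemma ff_nat: "(-1::real)^k * pochhammer (- real j) k = (if k \<le> j then fact j / fact (j - k) else 0)"
proof (cases "k \<le> j")
  case True
  have "(-1::real)^k * pochhammer (- real j) k = pochhammer (real j - real k + 1) k"
    by (simp add: pochhammer_minus flip: power_add mult_2)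
  also have "real j - real k + 1 = 1 + of_nat (j - k)" using True by simp
  finally have e: "(-1::real)^k * pochhammer (- real j) k = pochhammer (1 + of_nat (j - k)) k" .
  have "(fact j :: real) = pochhammer 1 ((j - k) + k)" using True by (simp add: pochhammer_fact)
  also have "\<dots> = fact (j - k) * pochhammer (1 + of_nat (j - k)) k"
    by (simp add: pochhammer_product' pochhammer_fact)
  finally have "pochhammer (1 + of_nat (j - k)) k = (fact j :: real) / fact (j - k)"
    by (simp add: field_simps)
  then show ?thesis using e True by simp
next
  case False
  then show ?thesis using pochhammer_of_nat_eq_0_lemma[of j k, where 'a=real] by simp
qed

lemma dobinski:
  "(\<lambda>j. real j ^ n / fact j) sums (exp 1 * (\<Sum>k\<le>n. real (Stirling n k)))"
proof -
  define g where "g k j = (if k \<le> j then 1 / fact (j - k) else (0::real))" for k j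
  have tm: "real j ^ n / fact j = (\<Sum>k\<le>n. real (Stirling n k) * g k j)" for j
  proof -
    have "real j ^ n = (\<Sum>k\<le>n. real (Stirling n k) * (if k \<le> j then fact j / fact (j - k) else 0))"
      using stirling2_poly[of n "real j"] by (simp add: ff_nat)
    then have "real j ^ n / fact j = (\<Sum>k\<le>n. real (Stirling n k) * (if k \<le> j then fact j / fact (j - k) else 0) / fact j)"
      by (simp add: sum_divide_distrib)
    also have "\<dots> = (\<Sum>k\<le>n. real (Stirling n k) * g k j)"
      by (rule sum.cong) (auto simp: g_def)
    finally show ?thesis .
  qed
  have gs: "g k sums exp 1" for k
  proof -
    have "(\<lambda>i. g k (i + k)) = (\<lambda>i. 1 ^ i /\<^sub>R fact i)"
      by (auto simp: g_def divide_inverse)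
    then have "(\<lambda>i. g k (i + k)) sums exp 1" using exp_converges[of "1::real"] by simp
    moreover have "(\<Sum>i<k. g k i) = 0" by (simp add: g_def)
    ultimately show ?thesis using sums_iff_shift[of "g k" k "exp 1"] by simp
  qed
  have "(\<lambda>j. \<Sum>k\<le>n. real (Stirling n k) * g k j) sums (\<Sum>k\<le>n. real (Stirling n k) * exp 1)"
    by (rule sums_sum) (rule sums_mult[OF gs])
  then show ?thesis by (simp add: tm sum_distrib_left mult.commute)
qed

lemma summable_poch: "summable (\<lambda>m. pochhammer (real m + 1) k / fact (m + 1))"
proof -
  have e: "pochhammer (real m + 1) k / fact (m + 1) =
     (\<Sum>i\<le>k. real (stirling k i) * (real (m + 1) ^ i / fact (m + 1)))" for m
  proof -
    have "pochhammer (real m + 1) k / fact (m + 1) =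
      (\<Sum>i\<le>k. real (stirling k i) * (real m + 1) ^ i) / fact (m + 1)"
      by (simp only: stirling_pochhammer)
    also have "\<dots> = (\<Sum>i\<le>k. real (stirling k i) * ((real m + 1) ^ i / fact (m + 1)))"
      by (simp only: sum_divide_distrib times_divide_eq_right)
    finally show ?thesis by (simp only: of_nat_add of_nat_1)
  qed
  have "summable (\<lambda>m. real (m + 1) ^ i / fact (m + 1))" for i
  proof -
    have "summable (\<lambda>j. real j ^ i / fact j)" using sums_summable[OF dobinski] .
    then show ?thesis using summable_iff_shift[of "\<lambda>j. real j ^ i / fact j" 1] by blast
  qed
  then have "summable (\<lambda>m. \<Sum>i\<le>k. real (stirling k i) * (real (m + 1) ^ i / fact (m + 1)))"
    by (intro summable_sum summable_mult)
  then show ?thesis by (simp only: e)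
qed

lemma aux_frac: "(F::real) \<noteq> 0 \<Longrightarrow> b \<noteq> 0 \<Longrightarrow> c \<noteq> 0 \<Longrightarrow> c * x = b * y \<Longrightarrow> x / F / b = y / F / c"
  by (simp add: field_simps)

lemma hyp_eq:
  "(\<lambda>m. pochhammer (real m + 1) k / fact (m + 1)) sums (fact k * hyp1F1 (real k + 1) 2 1)"
proof -
  define u where "u m = pochhammer (real m + 1) k / fact (m + 1)" for m
  have t: "pochhammer (real k + 1) m / pochhammer 2 m * 1 ^ m / fact m = u m / fact k" for m
  proof -
    have p2: "pochhammer (2::real) m = fact (m + 1)"
      using pochhammer_rec[of "1::real" m] by (simp add: pochhammer_fact)
    have "(fact (k + m) :: real) = fact k * pochhammer (real k + 1) m"
      using pochhammer_product'[of "1::real" k m] by (simp add: pochhammer_fact add.commute)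
    moreover have "(fact (m + k) :: real) = fact m * pochhammer (real m + 1) k"
      using pochhammer_product'[of "1::real" m k] by (simp add: pochhammer_fact add.commute)
    ultimately have "fact k * pochhammer (real k + 1) m = fact m * pochhammer (real m + 1) k"
      by (simp add: add.commute)
    then show ?thesis unfolding u_def p2 power_one mult_1_right
      by (intro aux_frac) simp_all
  qed
  have s: "u sums suminf u" using summable_poch unfolding u_def by (simp add: summable_sums)
  then have "(\<lambda>m. u m / fact k) sums (suminf u / fact k)" by (rule sums_divide)
  then have "hyp1F1 (real k + 1) 2 1 = suminf u / fact k"
    unfolding hyp1F1_def t by (rule sums_unique[symmetric])
  then show ?thesis using s unfolding u_def by simp
qed

lemma rising_id:
  assumes "n \<ge> 1"
  shows "(\<Sum>k=1..n. (-1) ^ (n - k) * real (Stirling n k) * pochhammer y k) = y ^ n"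
proof -
  have h: "(-y)^n = (\<Sum>k\<le>n. real (Stirling n k) * ((-1)^k * pochhammer y k))"
    using stirling2_poly[of n "-y"] by simp
  have m1: "(-1::real)^n * (-y)^n = y^n" by (simp flip: power_mult_distrib)
  have "y^n = (\<Sum>k\<le>n. (-1)^n * (real (Stirling n k) * ((-1)^k * pochhammer y k)))"
    unfolding m1[symmetric] h by (rule sum_distrib_left)
  also have "\<dots> = (\<Sum>k\<le>n. (-1) ^ (n - k) * real (Stirling n k) * pochhammer y k)"
  proof (rule sum.cong[OF refl])
    fix k assume "k \<in> {..n}"
    then have e1: "(-1::real)^n = (-1)^(n-k) * (-1)^k" by (simp flip: power_add)
    have e2: "(-1::real)^k * (-1)^k = 1" by (simp flip: power_mult_distrib)
    have "(-1::real)^n * (real (Stirling n k) * ((-1)^k * pochhammer y k)) =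
       (-1)^(n-k) * ((-1)^k * (-1)^k) * real (Stirling n k) * pochhammer y k"
      unfolding e1 by (simp only: ac_simps)
    then show "(-1)^n * (real (Stirling n k) * ((-1)^k * pochhammer y k)) =
      (-1) ^ (n - k) * real (Stirling n k) * pochhammer y k"
      unfolding e2 by simp
  qed
  also have "{..n} = insert 0 {1..n}" by auto
  also have "(\<Sum>k\<in>insert 0 {1..n}. (-1) ^ (n - k) * real (Stirling n k) * pochhammer y k)
      = (\<Sum>k=1..n. (-1) ^ (n - k) * real (Stirling n k) * pochhammer y k)"
  proof -
    obtain m where "n = Suc m" using assms by (cases n) auto
    then show ?thesis by (subst sum.insert) auto
  qed
  finally show ?thesis by simp
qed



theorem theorem1p1:
  fixes n :: nat
  assumes "n \<ge> 1"
  shows "real (Bell n) = (1 / exp 1) *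
    (\<Sum>k=1..n. (-1) ^ (n - k) * real (Stirling n k) * fact k * hyp1F1 (real k + 1) 2 1)"
proof -
  define c where "c k = (-1) ^ (n - k) * real (Stirling n k)" for k
  have s1: "(\<lambda>m. \<Sum>k\<in>{1..n}. c k * (pochhammer (real m + 1) k / fact (m + 1))) sums
      (\<Sum>k\<in>{1..n}. c k * (fact k * hyp1F1 (real k + 1) 2 1))"
    by (rule sums_sum) (rule sums_mult[OF hyp_eq])
  have f: "(\<Sum>k\<in>{1..n}. c k * (pochhammer (real m + 1) k / fact (m + 1))) = real (m + 1) ^ n / fact (m + 1)" for m
  proof -
    have "(\<Sum>k\<in>{1..n}. c k * (pochhammer (real m + 1) k / fact (m + 1))) =
      (\<Sum>k\<in>{1..n}. c k * pochhammer (real m + 1) k) / fact (m + 1)"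
      by (simp add: sum_divide_distrib)
    also have "(\<Sum>k\<in>{1..n}. c k * pochhammer (real m + 1) k) = (real m + 1) ^ n"
      using rising_id[OF assms, of "real m + 1"] unfolding c_def .
    finally show ?thesis by (simp only: of_nat_add of_nat_1)
  qed
  have s2: "(\<lambda>m. real (m + 1) ^ n / fact (m + 1)) sums (exp 1 * real (Bell n))"
  proof -
    have d: "(\<lambda>j. real j ^ n / fact j) sums (exp 1 * real (Bell n))"
      using dobinski[of n] unfolding Bell_Stirling by simp
    have "(\<Sum>i<1. real i ^ n / fact i) = (0::real)" using assms by simp
    then show ?thesis using sums_iff_shift[of "\<lambda>j. real j ^ n / fact j" 1 "exp 1 * real (Bell n)"] d assms
      by (simp add: zero_power)
  qed
  have "(\<Sum>k\<in>{1..n}. c k * (fact k * hyp1F1 (real k + 1) 2 1)) = exp 1 * real (Bell n)"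
    using sums_unique2[OF s1[unfolded f] s2] .
  then show ?thesis unfolding c_def by (simp add: mult.assoc)
qed


end
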